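(* Let $q$ be a prime power, $r\mid(q-1)$ with $r\ge3$, $q/2\le \ell\le q-1$, and $s\mid (q-1)/r$. The folded quantum Tamo–Barg code with parameters $q,r,\ell,s$ is a quantum locally recoverable code with locality $r$.
   Context: $[n]=\{0,\dots,n-1\}$, $\mathbb{F}_q^*=\mathbb{F}_q\setminus\{0\}$. For $S\subseteq\mathbb{Z}_{\ge0}$, $\mathbb{F}_q[X]^S=\{\sum_{i\in S}a_iX^i\}$, $\mathrm{ev}(f)=(f(x))_{x\in\mathbb{F}_q^*}$. Let $S=\{i\in[\ell]:i\not\equiv r-1\pmod r\}\cup\{i\in[q-1]:i\equiv1\pmod r\}$, $C=\mathrm{ev}(\mathbb{F}_q[X]^S)$; for $\ell\ge q/2$, $C^\perp\subseteq C$ and the quantum Tamo–Barg code is $\mathrm{CSS}(C,C)=\mathrm{span}\{\sum_{y\in C^\perp}|x+y\rangle:x\in C\}\subseteq(\mathbb{C}^q)^{\otimes(q-1)}$, qudits indexed by $\mathbb{F}_q^*$. Folding: fix a generator $\omega$ of $\mathbb{F}_q^*$ and for $i\in[(q-1)/s]$ group the $s$ qudits at positions $\{\omega^{si},\omega^{si+1},\dots,\omega^{si+s-1}\}$ into a single qudit of local dimension $q^s$; the resulting code of block length $(q-1)/s$ is the folded quantum Tamo–Barg code. A quantum code on qudit set $Q$ is locally recoverable with locality $r$ if for each $i\in Q$ there is $I_i\subseteq Q$ with $i\in I_i$, $|I_i|\le r$, and a quantum channel $\mathrm{Rec}_i$ from qudits $I_i\setminus\{i\}$ to qudits $I_i$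 with $(\mathrm{Rec}_i\otimes\mathrm{id})(\psi_{Q\setminus\{i\}})=\psi$ for every code state $\psi$. *)

theory Defs
  imports Complex_Main "HOL-Computational_Algebra.Polynomial" "HOL-Library.Cardinality"
begin

text \<open>Positions (physical qudits before folding) have type 'p, the local alphabet is 'a.
  A basis configuration on a position set P is a function 'p => 'a that is 0 outside P.
  Vectors are functions from configurations to complex numbers, operators are
  complex matrices indexed by pairs of configurations.\<close>

definition cfgs :: "'p set \<Rightarrow> ('p \<Rightarrow> 'a::zero) set" where
  "cfgs P = {f. \<forall>p. p \<notin> P \<longrightarrow> f p = 0}"

definition glue :: "'p set \<Rightarrow> ('p \<Rightarrow> 'a) \<Rightarrow> ('p \<Rightarrow> 'a) \<Rightarrow> 'p \<Rightarrow> 'a" where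
  "glue A x z = (\<lambda>p. if p \<in> A then x p else z p)"

definition restr :: "'p set \<Rightarrow> ('p \<Rightarrow> 'a::zero) \<Rightarrow> 'p \<Rightarrow> 'a" where
  "restr A x = (\<lambda>p. if p \<in> A then x p else 0)"

type_synonym ('p, 'a) qop = "('p \<Rightarrow> 'a) \<Rightarrow> ('p \<Rightarrow> 'a) \<Rightarrow> complex"

definition ptrace :: "'p set \<Rightarrow> 'p set \<Rightarrow> ('p, 'a::zero) qop \<Rightarrow> ('p, 'a) qop" where
  "ptrace P T \<rho> = (\<lambda>x y. \<Sum>z\<in>cfgs T. \<rho> (glue (P - T) x z) (glue (P - T) y z))"

text \<open>A quantum channel from the qudits A to the qudits B, in Kraus form
  (Kraus operators K k, k < n, with K k b a a matrix from configs on A to configs on B,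
  satisfying the trace-preservation condition sum_k K_k^dagger K_k = I).\<close>
definition is_channel :: "'p set \<Rightarrow> 'p set \<Rightarrow> nat \<Rightarrow> (nat \<Rightarrow> ('p, 'a::zero) qop) \<Rightarrow> bool" where
  "is_channel A B n K \<longleftrightarrow>
     (\<forall>a\<in>cfgs A. \<forall>a'\<in>cfgs A.
        (\<Sum>k<n. \<Sum>b\<in>cfgs B. cnj (K k b a) * K k b a') = (if a = a' then 1 else 0))"

text \<open>Apply (channel A -> B) tensor identity on the environment qudits E to an operator
  on A \<union> E; the result is an operator on B \<union> E.\<close>
definition apply_channel ::
  "'p set \<Rightarrow> 'p set \<Rightarrow> 'p set \<Rightarrow> nat \<Rightarrow> (nat \<Rightarrow> ('p, 'a::zero) qop) \<Rightarrow> ('p, 'a) qop \<Rightarrow> ('p, 'a) qop" where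
  "apply_channel A B E n K \<sigma> = (\<lambda>x y.
     \<Sum>k<n. \<Sum>a\<in>cfgs A. \<Sum>a'\<in>cfgs A.
        K k (restr B x) a * \<sigma> (glue A a (restr E x)) (glue A a' (restr E y)) * cnj (K k (restr B y) a'))"

text \<open>Code states of a code space V on positions P: density operators supported on V,
  i.e. convex combinations of projectors onto unit vectors of V.\<close>
definition code_state :: "'p set \<Rightarrow> (('p \<Rightarrow> 'a::zero) \<Rightarrow> complex) set \<Rightarrow> ('p, 'a) qop \<Rightarrow> bool" where
  "code_state P V \<rho> \<longleftrightarrow>
     (\<exists>n (pr :: nat \<Rightarrow> real) \<psi>.
        (\<forall>k<n. pr k \<ge> 0 \<and> \<psi> k \<in> V \<and> (\<Sum>x\<in>cfgs P. (cmod (\<psi> k x))\<^sup>2) = 1) \<and>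
        (\<Sum>k<n. pr k) = 1 \<and>
        (\<forall>x\<in>cfgs P. \<forall>y\<in>cfgs P. \<rho> x y = (\<Sum>k<n. complex_of_real (pr k) * \<psi> k x * cnj (\<psi> k y))))"

text \<open>The (possibly folded) qudits are
  indexed by Qd; qudit i consists of the physical positions blk i (the blocks partition P),
  so a qudit of local dimension |a|^|blk i| is the tensor product of these positions.\<close>
definition qLRC :: "'p set \<Rightarrow> 'i set \<Rightarrow> ('i \<Rightarrow> 'p set) \<Rightarrow> (('p \<Rightarrow> 'a::zero) \<Rightarrow> complex) set \<Rightarrow> nat \<Rightarrow> bool" where
  "qLRC P Qd blk V r \<longleftrightarrow>
     (\<forall>i\<in>Qd. \<exists>I. i \<in> I \<and> I \<subseteq> Qd \<and> finite I \<and> card I \<le> r \<and>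
        (\<exists>n K. is_channel (\<Union>(blk ` (I - {i}))) (\<Union>(blk ` I)) n K \<and>
          (\<forall>\<rho>. code_state P V \<rho> \<longrightarrow>
             (\<forall>x\<in>cfgs P. \<forall>y\<in>cfgs P.
                apply_channel (\<Union>(blk ` (I - {i}))) (\<Union>(blk ` I)) (P - \<Union>(blk ` I)) n K
                   (ptrace P (blk i) \<rho>) x y = \<rho> x y))))"

definition TB_S :: "nat \<Rightarrow> nat \<Rightarrow> nat \<Rightarrow> nat set" where
  "TB_S q r l = {i. i < l \<and> i mod r \<noteq> r - 1} \<union> {i. i < q - 1 \<and> i mod r = 1}"

text \<open>Evaluation vector (f(x))_{x in F_q^*}, as a word on positions F_q^* (0 at position 0).\<close>
definition ev :: "'a::field poly \<Rightarrow> 'a \<Rightarrow> 'a" where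
  "ev f = (\<lambda>x. if x = 0 then 0 else poly f x)"

definition TB_code :: "nat \<Rightarrow> nat \<Rightarrow> ('a::{finite,field} \<Rightarrow> 'a) set" where
  "TB_code r l = {ev f | f. \<forall>i. i \<notin> TB_S (card (UNIV :: 'a set)) r l \<longrightarrow> coeff f i = 0}"

definition dual_code :: "('a::{finite,field} \<Rightarrow> 'a) set \<Rightarrow> ('a \<Rightarrow> 'a) set" where
  "dual_code C = {y \<in> cfgs (- {0}). \<forall>c\<in>C. (\<Sum>x\<in>- {0}. c x * y x) = 0}"

text \<open>CSS(C1, C2) = span { sum_{y in C2^perp} |x + y> : x in C1 } on positions P.\<close>
definition coset_ket :: "'p set \<Rightarrow> ('p \<Rightarrow> 'a::{zero,plus}) set \<Rightarrow> ('p \<Rightarrow> 'a) \<Rightarrow> ('p \<Rightarrow> 'a) \<Rightarrow> complex" where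
  "coset_ket P D x = (\<lambda>z. if z \<in> cfgs P \<and> (\<exists>y\<in>D. z = (\<lambda>p. x p + y p)) then 1 else 0)"

definition CSS_space :: "'p set \<Rightarrow> ('p \<Rightarrow> 'a::{zero,plus}) set \<Rightarrow> ('p \<Rightarrow> 'a) set \<Rightarrow> (('p \<Rightarrow> 'a) \<Rightarrow> complex) set" where
  "CSS_space P C D = {(\<lambda>z. \<Sum>x\<in>C. c x * coset_ket P D x z) | c. True}"

definition qTB_space :: "nat \<Rightarrow> nat \<Rightarrow> (('a::{finite,field} \<Rightarrow> 'a) \<Rightarrow> complex) set" where
  "qTB_space r l = CSS_space (- {0}) (TB_code r l) (dual_code (TB_code r l))"

definition fold_blk :: "nat \<Rightarrow> 'a::field \<Rightarrow> nat \<Rightarrow> 'a set" where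
  "fold_blk s \<omega> i = {\<omega> ^ (s * i + t) | t. t < s}"

end

theory Submission
  imports Defs "HOL-Library.Function_Algebras"
begin

lemma cfgs_finite: "finite (cfgs (T::'p::finite set) :: ('p \<Rightarrow> 'a::{finite,zero}) set)"
  by (rule finite_subset[of _ UNIV]) auto

lemma zero_in_cfgs: "0 \<in> cfgs T"
  by (simp add: cfgs_def)

lemma cfgs_add: "x \<in> cfgs T \<Longrightarrow> y \<in> cfgs T \<Longrightarrow> (x::'p \<Rightarrow> 'a::monoid_add) + y \<in> cfgs T"
  by (simp add: cfgs_def)
lemma cfgs_diff: "x \<in> cfgs T \<Longrightarrow> y \<in> cfgs T \<Longrightarrow> (x::'p \<Rightarrow> 'a::ab_group_add) - y \<in> cfgs T"
  by (simp add: cfgs_def)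
lemma cfgs_mono: "x \<in> cfgs T \<Longrightarrow> T \<subseteq> U \<Longrightarrow> x \<in> cfgs U"
  by (auto simp add: cfgs_def)
lemma restr_cfgs: "restr T x \<in> cfgs T"
  by (simp add: cfgs_def restr_def)

definition kr :: "'p set \<Rightarrow> 'p set \<Rightarrow> (('p \<Rightarrow> 'a) \<Rightarrow> ('p \<Rightarrow> 'a)) \<Rightarrow> (('p \<Rightarrow> 'a) \<Rightarrow> ('p \<Rightarrow> 'a))
   \<Rightarrow> ('p \<Rightarrow> 'a::ab_group_add) \<Rightarrow> ('p, 'a) qop" where
  "kr T B R L t b a = (if R a = t \<and> restr (B - T) b = a + L (restr T b) - L t
     then complex_of_real (1 / sqrt (real (card (cfgs T :: ('p \<Rightarrow> 'a) set)))) else 0)"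

lemma restr_add: "restr T (x + y) = restr T x + restr T (y::'p \<Rightarrow> 'a::monoid_add)"
  by (auto simp: restr_def)
lemma restr_diff: "restr T (x - y) = restr T x - restr T (y::'p \<Rightarrow> 'a::group_add)"
  by (auto simp: restr_def)
lemma restr_id: "x \<in> cfgs T \<Longrightarrow> restr T x = x"
  by (auto simp: restr_def cfgs_def)
lemma restr_zero: "x \<in> cfgs U \<Longrightarrow> U \<inter> T = {} \<Longrightarrow> restr T x = 0"
  by (auto simp: restr_def cfgs_def fun_eq_iff)
lemma restr_restr: "restr T (restr U x) = restr (T \<inter> U) x"
  by (auto simp: restr_def)
lemma restr_split: "x \<in> cfgs B \<Longrightarrow> T \<subseteq> B \<Longrightarrow> x = restr T x + restr (B - T) (x::'p \<Rightarrow> 'a::monoid_add)"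
  by (auto simp: restr_def cfgs_def)

lemma kr_card:
  fixes T B :: "'p::finite set" and L :: "('p \<Rightarrow> 'a::{finite,ab_group_add}) \<Rightarrow> ('p \<Rightarrow> 'a)"
  assumes TB: "T \<subseteq> B" and L_cfg: "\<forall>u. L u \<in> cfgs (B - T)" and a: "a \<in> cfgs (B - T)"
  shows "card {b\<in>cfgs B. restr (B - T) b = a + L (restr T b) - L t} = card (cfgs T :: ('p \<Rightarrow> 'a) set)"
proof (rule bij_betw_same_card[of "restr T"], rule bij_betwI')
  fix x y assume x: "x \<in> {b\<in>cfgs B. restr (B - T) b = a + L (restr T b) - L t}"
    and y: "y \<in> {b\<in>cfgs B. restr (B - T) b = a + L (restr T b) - L t}"
  show "(restr T x = restr T y) = (x = y)"
  proof
    assume h: "restr T x = restr T y"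
    have "x = restr T x + restr (B - T) x" using x TB restr_split by blast
    also have "\<dots> = restr T y + restr (B - T) y" using h x y by simp
    also have "\<dots> = y" using y TB restr_split[symmetric] by blast
    finally show "x = y" .
  qed simp
next
  fix x show "restr T x \<in> cfgs T" by (rule restr_cfgs)
next
  fix y :: "'p \<Rightarrow> 'a" assume y: "y \<in> cfgs T"
  define w where "w = a + L y - L t"
  have w: "w \<in> cfgs (B - T)" unfolding w_def using a L_cfg by (intro cfgs_add cfgs_diff) auto
  have r1: "restr T (y + w) = y" using y w by (simp add: restr_add restr_id restr_zero[of w "B - T"] Int_commute)
  have r2: "restr (B - T) (y + w) = w" using y w by (simp add: restr_add restr_id restr_zero[of y T] Int_commute)
  have "y + w \<in> cfgs B" using y w TB by (intro cfgs_add) (auto intro: cfgs_mono)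
  then show "\<exists>x\<in>{b\<in>cfgs B. restr (B - T) b = a + L (restr T b) - L t}. y = restr T x"
    using r1 r2 by (intro bexI[of _ "y + w"]) (auto simp: w_def)
qed

lemma kr_is_channel:
  fixes T B :: "'p::finite set" and R L :: "('p \<Rightarrow> 'a::{finite,ab_group_add}) \<Rightarrow> ('p \<Rightarrow> 'a)"
  assumes TB: "T \<subseteq> B" and R_cfg: "\<forall>a. R a \<in> cfgs T" and L_cfg: "\<forall>u. L u \<in> cfgs (B - T)"
    and e: "bij_betw e {..<n} (cfgs T)"
  shows "is_channel (B - T) B n (\<lambda>k. kr T B R L (e k))"
  unfolding is_channel_def
proof (intro ballI)
  fix a a' :: "'p \<Rightarrow> 'a" assume a: "a \<in> cfgs (B - T)" and a': "a' \<in> cfgs (B - T)"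
  define N where "N = card (cfgs T :: ('p \<Rightarrow> 'a) set)"
  have Npos: "N > 0" unfolding N_def using cfgs_finite zero_in_cfgs
    by (metis card_gt_0_iff empty_iff)
  define F where "F = (\<lambda>t. \<Sum>b\<in>cfgs B. cnj (kr T B R L t b a) * kr T B R L t b a')"
  have "(\<Sum>k<n. \<Sum>b\<in>cfgs B. cnj (kr T B R L (e k) b a) * kr T B R L (e k) b a') = (\<Sum>k<n. F (e k))"
    unfolding F_def by simp
  also have "\<dots> = (\<Sum>t\<in>(cfgs T :: ('p \<Rightarrow> 'a) set). F t)" by (rule sum.reindex_bij_betw[OF e])
  also have "\<dots> = (\<Sum>t\<in>(cfgs T :: ('p \<Rightarrow> 'a) set). if a = a' \<and> R a = t then 1 else 0)"
  proof (rule sum.cong[OF refl])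
    fix t :: "'p \<Rightarrow> 'a" assume t: "t \<in> cfgs T"
    have c2: "cnj (complex_of_real (1 / sqrt (real N))) * complex_of_real (1 / sqrt (real N)) = 1 / of_nat N"
      using Npos by (simp add: of_real_mult[symmetric] del: of_real_mult)
    have "F t = (\<Sum>b\<in>cfgs B. if R a = t \<and> R a' = t \<and> restr (B - T) b = a + L (restr T b) - L t
        \<and> restr (B - T) b = a' + L (restr T b) - L t then 1 / of_nat N else 0)"
      unfolding F_def kr_def N_def[symmetric] using c2 by (intro sum.cong) auto
    also have "\<dots> = (if a = a' \<and> R a = t then 1 else 0)"
    proof (cases "a = a' \<and> R a = t")
      case True
      then have "(\<Sum>b\<in>cfgs B. if R a = t \<and> R a' = t \<and> restr (B - T) b = a + L (restr T b) - L t
        \<and> restr (B - T) b = a' + L (restr T b) - L t then 1 / of_nat N else 0)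
        = (\<Sum>b\<in>{b\<in>cfgs B. restr (B - T) b = a + L (restr T b) - L t}. 1 / (of_nat N :: complex))"
        by (simp add: sum.inter_filter[OF cfgs_finite, symmetric] cong: conj_cong)
      also have "\<dots> = of_nat N * (1 / of_nat N)"
        using kr_card[OF TB L_cfg a, of t] N_def by simp
      also have "\<dots> = 1" using Npos by simp
      finally show ?thesis by (rule trans[OF _ if_P[OF True, symmetric]])
    next
      case False
      have nb: "\<And>b. \<not> (R a = t \<and> R a' = t \<and> restr (B - T) b = a + L (restr T b) - L t
        \<and> restr (B - T) b = a' + L (restr T b) - L t)"
        using False by auto
      have "(\<Sum>b\<in>cfgs B. if R a = t \<and> R a' = t \<and> restr (B - T) b = a + L (restr T b) - L t
        \<and> restr (B - T) b = a' + L (restr T b) - L t then 1 / (of_nat N :: complex) else 0) = 0"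
        by (intro sum.neutral ballI if_not_P nb)
      then show ?thesis using False by (simp only: if_False)
    qed
    finally show "F t = (if a = a' \<and> R a = t then 1 else 0)" .
  qed
  also have "\<dots> = (if a = a' then 1 else 0)"
    using R_cfg by (simp add: sum.delta'[OF cfgs_finite] cong: if_cong) 
  finally show "(\<Sum>k<n. \<Sum>b\<in>cfgs B. cnj (kr T B R L (e k) b a) * kr T B R L (e k) b a') = (if a = a' then 1 else 0)" .
qed

lemma double_delta:
  fixes c :: complex
  assumes "finite S" "\<alpha> \<in> S" "\<beta> \<in> S"
  shows "(\<Sum>a\<in>S. \<Sum>a'\<in>S. (if a = \<alpha> \<and> P then c else 0) * G a a' * cnj (if a' = \<beta> \<and> Q then c else 0))
    = (if P \<and> Q then c * G \<alpha> \<beta> * cnj c else 0)"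
proof -
  have "(\<Sum>a\<in>S. \<Sum>a'\<in>S. (if a = \<alpha> \<and> P then c else 0) * G a a' * cnj (if a' = \<beta> \<and> Q then c else 0))
     = (\<Sum>a\<in>S. if a = \<alpha> \<and> P then (\<Sum>a'\<in>S. if a' = \<beta> \<and> Q then c * G a a' * cnj c else 0) else 0)"
    by (intro sum.cong refl) (auto intro!: sum.cong)
  also have "\<dots> = (if P \<and> Q then c * G \<alpha> \<beta> * cnj c else 0)"
    using assms by (cases P; cases Q) (simp_all add: sum.delta')
  finally show ?thesis .
qed

lemma glue3:
  assumes "u \<in> cfgs A" "v \<in> cfgs E" "w \<in> cfgs T" "A \<inter> T = {}" "E \<inter> T = {}" "A \<inter> E = {}"
    "P - T = A \<union> E"
  shows "glue (P - T) (glue A u v) w = w + u + (v :: 'p \<Rightarrow> 'a::monoid_add)"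
proof
  fix p
  show "glue (P - T) (glue A u v) w p = (w + u + v) p"
  proof -
    have pt: "p \<in> P - T \<longleftrightarrow> p \<in> A \<or> p \<in> E" using assms(7) by blast
    show ?thesis
      using assms(1-6) unfolding glue_def cfgs_def plus_fun_def pt
      by (cases "p \<in> T"; cases "p \<in> A"; cases "p \<in> E") auto
  qed
qed

lemma kr_recovers:
  fixes P T B :: "'p::finite set" and R L :: "('p \<Rightarrow> 'a::{finite,ab_group_add}) \<Rightarrow> ('p \<Rightarrow> 'a)"
    and \<rho> :: "('p, 'a) qop" and W D :: "('p \<Rightarrow> 'a) set"
  assumes TB: "T \<subseteq> B" and BP: "B \<subseteq> P"
    and R_cfg: "\<forall>a. R a \<in> cfgs T" and L_cfg: "\<forall>u. L u \<in> cfgs (B - T)"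
    and R_add: "\<forall>a b. R (a + b) = R a + R b" and R_diff: "\<forall>a b. R (a - b) = R a - R b"
    and L_diff: "\<forall>u v. L (u - v) = L u - L v"
    and RL: "\<forall>u\<in>cfgs T. R (L u) = u"
    and Wp: "\<forall>z\<in>cfgs P. z \<in> W \<longrightarrow> restr T z = R (restr (B - T) z)"
    and Dp: "\<forall>u\<in>cfgs T. u + L u \<in> D"
    and hS: "\<forall>z\<in>cfgs P. \<forall>z'\<in>cfgs P. \<rho> z z' \<noteq> 0 \<longrightarrow> z \<in> W \<and> z' \<in> W"
    and hI: "\<forall>z\<in>cfgs P. \<forall>z'\<in>cfgs P. \<forall>d\<in>D. d \<in> cfgs P \<longrightarrow> \<rho> (z + d) z' = \<rho> z z' \<and> \<rho> z (z' + d) = \<rho> z z'"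
    and e: "bij_betw e {..<n} (cfgs T)"
    and x: "x \<in> cfgs P" and y: "y \<in> cfgs P"
  shows "apply_channel (B - T) B (P - B) n (\<lambda>k. kr T B R L (e k)) (ptrace P T \<rho>) x y = \<rho> x y"
proof -
  define A where "A = B - T"
  define E where "E = P - B"
  define N where "N = card (cfgs T :: ('p \<Rightarrow> 'a) set)"
  define c where "c = complex_of_real (1 / sqrt (real N))"
  have Npos: "N > 0" unfolding N_def using cfgs_finite zero_in_cfgs
    by (metis card_gt_0_iff empty_iff)
  have cc: "of_nat N * (c * cnj c) = 1" unfolding c_def using Npos
    by (simp add: of_real_mult[symmetric] del: of_real_mult)
  have AP: "A \<subseteq> P" "T \<subseteq> P" "E \<subseteq> P" using TB BP by (auto simp: A_def E_def)
  have disj: "A \<inter> T = {}" "E \<inter> T = {}" "A \<inter> E = {}" "P - T = A \<union> E"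
    using TB BP by (auto simp: A_def E_def)
  have split: "\<And>z :: 'p \<Rightarrow> 'a. z \<in> cfgs P \<Longrightarrow> z = restr T z + restr A z + restr E z"
    using TB BP by (auto simp: restr_def cfgs_def A_def E_def plus_fun_def fun_eq_iff)
  have LA: "\<And>u. L u \<in> cfgs A" using L_cfg by (simp add: A_def)
  have inP: "\<And>z U. z \<in> cfgs U \<Longrightarrow> U \<subseteq> P \<Longrightarrow> z \<in> cfgs P" by (rule cfgs_mono)
  have Rlin: "\<And>a u t. R (a - L u + L t) = R a - R (L u) + R (L t)" using R_add R_diff by simp
  have kx: "kr T B R L t (restr B z) a =
      (if a = restr A z - L (restr T z) + L t \<and> restr T z = R (restr A z) then c else 0)"
    if t: "t \<in> cfgs T" and a: "a \<in> cfgs A" for t a and z :: "'p \<Rightarrow> 'a"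
  proof -
    have r1: "restr (B - T) (restr B z) = restr A z" "restr T (restr B z) = restr T z"
      using TB by (auto simp: restr_restr A_def Int_absorb2 Int_commute intro: arg_cong2[where f=restr])
    have zT: "restr T z \<in> cfgs T" by (rule restr_cfgs)
    have "(R a = t \<and> restr A z = a + L (restr T z) - L t) \<longleftrightarrow>
          (a = restr A z - L (restr T z) + L t \<and> restr T z = R (restr A z))"
    proof
      assume h: "R a = t \<and> restr A z = a + L (restr T z) - L t"
      then have ha: "a = restr A z - L (restr T z) + L t" by (simp add: algebra_simps)
      have "t = R (restr A z) - restr T z + t" using h ha Rlin RL t zT by metis
      then show "a = restr A z - L (restr T z) + L t \<and> restr T z = R (restr A z)"
        using ha by (simp add: algebra_simps)
    next
      assume h: "a = restr A z - L (restr T z) + L t \<and> restr T z = R (restr A z)"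
      then have ha: "a = restr A z - L (restr T z) + L t" and hz: "restr T z = R (restr A z)" by auto
      have "R a = R (restr A z) - R (L (restr T z)) + R (L t)" using ha Rlin by simp
      also have "\<dots> = t" using RL t zT hz by simp
      finally have "R a = t" .
      moreover have "restr A z = a + L (restr T z) - L t" using ha by (simp add: algebra_simps)
      ultimately show "R a = t \<and> restr A z = a + L (restr T z) - L t" by blast
    qed
    then show ?thesis unfolding kr_def r1 c_def N_def A_def by simp
  qed
  define cx where "cx = (restr T x = R (restr A x))"
  define cy where "cy = (restr T y = R (restr A y))"
  define \<alpha> where "\<alpha> = (\<lambda>t. restr A x - L (restr T x) + L t)"
  define \<beta> where "\<beta> = (\<lambda>t. restr A y - L (restr T y) + L t)"
  have \<alpha>A: "\<alpha> t \<in> cfgs A" for t unfolding \<alpha>_def using LA restr_cfgs by (intro cfgs_add cfgs_diff) auto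
  have \<beta>A: "\<beta> t \<in> cfgs A" for t unfolding \<beta>_def using LA restr_cfgs by (intro cfgs_add cfgs_diff) auto
  have sig: "ptrace P T \<rho> (glue A (\<alpha> t) (restr E x)) (glue A (\<beta> t) (restr E y)) = \<rho> x y"
    if t: "t \<in> cfgs T" and hx: cx and hy: cy for t :: "'p \<Rightarrow> 'a"
  proof -
    have "ptrace P T \<rho> (glue A (\<alpha> t) (restr E x)) (glue A (\<beta> t) (restr E y))
      = (\<Sum>t'\<in>cfgs T. \<rho> (t' + \<alpha> t + restr E x) (t' + \<beta> t + restr E y))"
      unfolding ptrace_def
      by (intro sum.cong refl) (simp add: glue3[OF \<alpha>A restr_cfgs _ disj] glue3[OF \<beta>A restr_cfgs _ disj])
    also have "\<dots> = (\<Sum>t'\<in>cfgs T. if t' = t then \<rho> x y else 0)"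
    proof (rule sum.cong[OF refl])
      fix t' :: "'p \<Rightarrow> 'a" assume t': "t' \<in> cfgs T"
      define dx where "dx = (restr T x - t) + L (restr T x - t)"
      define dy where "dy = (restr T y - t) + L (restr T y - t)"
      have ux: "restr T x - t \<in> cfgs T" by (intro cfgs_diff restr_cfgs t)
      have dxD: "dx \<in> D" "dx \<in> cfgs P" unfolding dx_def using Dp ux
        by (auto intro!: cfgs_add inP[OF ux AP(2)] inP[OF LA AP(1)])
      have uy: "restr T y - t \<in> cfgs T" by (intro cfgs_diff restr_cfgs t)
      have dyD: "dy \<in> D" "dy \<in> cfgs P" unfolding dy_def using Dp uy
        by (auto intro!: cfgs_add inP[OF uy AP(2)] inP[OF LA AP(1)])
      have zx: "t' + \<alpha> t + restr E x \<in> cfgs P" using t' \<alpha>A restr_cfgs AP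
        by (intro cfgs_add) (auto intro: inP)
      have zy: "t' + \<beta> t + restr E y \<in> cfgs P" using t' \<beta>A restr_cfgs AP
        by (intro cfgs_add) (auto intro: inP)
      have ex: "t' + \<alpha> t + restr E x + dx = x + (t' - t)"
        using split[OF x] unfolding dx_def \<alpha>_def L_diff[rule_format]
        by (simp add: algebra_simps)
      have ey: "t' + \<beta> t + restr E y + dy = y + (t' - t)"
        using split[OF y] unfolding dy_def \<beta>_def L_diff[rule_format]
        by (simp add: algebra_simps)
      have "\<rho> (t' + \<alpha> t + restr E x) (t' + \<beta> t + restr E y) = \<rho> (x + (t' - t)) (y + (t' - t))"
      proof -
        have "\<rho> (t' + \<alpha> t + restr E x + dx) (t' + \<beta> t + restr E y + dy)
            = \<rho> (t' + \<alpha> t + restr E x) (t' + \<beta> t + restr E y + dy)"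
          using hI zx zy dxD dyD cfgs_add by blast
        also have "\<dots> = \<rho> (t' + \<alpha> t + restr E x) (t' + \<beta> t + restr E y)"
          using hI zx zy dxD dyD by blast
        finally show ?thesis using ex ey by simp
      qed
      also have "\<dots> = (if t' = t then \<rho> x y else 0)"
      proof (cases "t' = t")
        case False
        have xt: "x + (t' - t) \<in> cfgs P" using x t t' AP by (intro cfgs_add cfgs_diff) (auto intro: inP)
        have yt: "y + (t' - t) \<in> cfgs P" using y t t' AP by (intro cfgs_add cfgs_diff) (auto intro: inP)
        have "restr T (x + (t' - t)) = restr T x + (t' - t)"
          using t t' by (simp add: restr_add restr_diff restr_id)
        moreover have "restr A (x + (t' - t)) = restr A x"
        proof -
          have TA: "T \<inter> A = {}" using disj by blast
          show ?thesis using restr_zero[OF t TA] restr_zero[OF t' TA] by (simp add: restr_add restr_diff)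
        qed
        ultimately have "restr T (x + (t' - t)) \<noteq> R (restr (B - T) (x + (t' - t)))"
          using False hx unfolding cx_def A_def by simp
        then have "x + (t' - t) \<notin> W" using Wp xt by blast
        then show ?thesis using hS xt yt False by auto
      qed simp
      finally show "\<rho> (t' + \<alpha> t + restr E x) (t' + \<beta> t + restr E y) = (if t' = t then \<rho> x y else 0)" .
    qed
    also have "\<dots> = \<rho> x y" using t by (simp add: sum.delta'[OF cfgs_finite])
    finally show ?thesis .
  qed
  have "apply_channel (B - T) B (P - B) n (\<lambda>k. kr T B R L (e k)) (ptrace P T \<rho>) x y
     = (\<Sum>k<n. (\<lambda>t. \<Sum>a\<in>cfgs A. \<Sum>a'\<in>cfgs A. kr T B R L t (restr B x) a *
          ptrace P T \<rho> (glue A a (restr E x)) (glue A a' (restr E y)) * cnj (kr T B R L t (restr B y) a'))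
          (e k))"
    unfolding apply_channel_def A_def E_def by simp
  also have "\<dots> = (\<Sum>t\<in>cfgs T. \<Sum>a\<in>cfgs A. \<Sum>a'\<in>cfgs A. kr T B R L t (restr B x) a *
          ptrace P T \<rho> (glue A a (restr E x)) (glue A a' (restr E y)) * cnj (kr T B R L t (restr B y) a'))"
    by (rule sum.reindex_bij_betw[OF e])
  also have "\<dots> = (\<Sum>t\<in>(cfgs T :: ('p \<Rightarrow> 'a) set). if cx \<and> cy then c * \<rho> x y * cnj c else 0)"
  proof (rule sum.cong[OF refl])
    fix t :: "'p \<Rightarrow> 'a" assume t: "t \<in> cfgs T"
    have "(\<Sum>a\<in>cfgs A. \<Sum>a'\<in>cfgs A. kr T B R L t (restr B x) a *
          ptrace P T \<rho> (glue A a (restr E x)) (glue A a' (restr E y)) * cnj (kr T B R L t (restr B y) a'))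
       = (\<Sum>a\<in>cfgs A. \<Sum>a'\<in>cfgs A. (if a = \<alpha> t \<and> cx then c else 0) *
          ptrace P T \<rho> (glue A a (restr E x)) (glue A a' (restr E y)) * cnj (if a' = \<beta> t \<and> cy then c else 0))"
      using t by (intro sum.cong refl) (simp add: kx \<alpha>_def \<beta>_def cx_def cy_def)
    also have "\<dots> = (if cx \<and> cy then c * ptrace P T \<rho> (glue A (\<alpha> t) (restr E x)) (glue A (\<beta> t) (restr E y)) * cnj c else 0)"
      by (rule double_delta[OF cfgs_finite \<alpha>A \<beta>A])
    also have "\<dots> = (if cx \<and> cy then c * \<rho> x y * cnj c else 0)"
      using sig[OF t] by auto
    finally show "(\<Sum>a\<in>cfgs A. \<Sum>a'\<in>cfgs A. kr T B R L t (restr B x) a *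
          ptrace P T \<rho> (glue A a (restr E x)) (glue A a' (restr E y)) * cnj (kr T B R L t (restr B y) a'))
       = (if cx \<and> cy then c * \<rho> x y * cnj c else 0)" .
  qed
  also have "\<dots> = \<rho> x y"
  proof (cases "cx \<and> cy")
    case True
    then have "(\<Sum>t\<in>(cfgs T :: ('p \<Rightarrow> 'a) set). if cx \<and> cy then c * \<rho> x y * cnj c else 0)
       = of_nat N * (c * cnj c) * \<rho> x y" by (simp add: N_def)
    then show ?thesis using cc by simp
  next
    case False
    then have "x \<notin> W \<or> y \<notin> W" using Wp x y unfolding cx_def cy_def A_def by blast
    then have "\<rho> x y = 0" using hS x y by blast
    then show ?thesis by simp
  qed
  finally show ?thesis .
qed

lemma coset_ket_fun: "coset_ket P D x z = (if z \<in> cfgs P \<and> (\<exists>y\<in>D. z = x + y) then 1 else 0)"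
  unfolding coset_ket_def plus_fun_def by simp

lemma css_zero:
  assumes "\<psi> \<in> CSS_space P C D" "z \<notin> {x + y |x y. x \<in> C \<and> y \<in> D}"
  shows "\<psi> z = 0"
proof -
  obtain c where "\<psi> = (\<lambda>z. \<Sum>x\<in>C. c x * coset_ket P D x z)" using assms(1) unfolding CSS_space_def by auto
  then show ?thesis using assms(2) by (auto simp: coset_ket_fun intro!: sum.neutral)
qed

lemma css_inv:
  fixes D :: "('p \<Rightarrow> 'a::ab_group_add) set"
  assumes "\<psi> \<in> CSS_space P C D" "\<forall>a\<in>D. \<forall>b\<in>D. a + b \<in> D \<and> a - b \<in> D"
    "d \<in> D" "d \<in> cfgs P" "z \<in> cfgs P"
  shows "\<psi> (z + d) = \<psi> z"
proof -
  obtain c where psi: "\<psi> = (\<lambda>z. \<Sum>x\<in>C. c x * coset_ket P D x z)" using assms(1) unfolding CSS_space_def by auto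
  have zd: "z + d \<in> cfgs P" using assms(5,4) by (rule cfgs_add)
  have "coset_ket P D x (z + d) = coset_ket P D x z" for x
  proof -
    have "(\<exists>y\<in>D. z + d = x + y) \<longleftrightarrow> (\<exists>y\<in>D. z = x + y)"
    proof
      assume "\<exists>y\<in>D. z + d = x + y"
      then obtain y where "y \<in> D" "z + d = x + y" by blast
      then show "\<exists>y\<in>D. z = x + y" using assms(2,3)
        by (intro bexI[of _ "y - d"]) (auto simp: algebra_simps dest: arg_cong[where f="\<lambda>w. w - d"])
    next
      assume "\<exists>y\<in>D. z = x + y"
      then obtain y where "y \<in> D" "z = x + y" by blast
      then show "\<exists>y\<in>D. z + d = x + y" using assms(2,3)
        by (intro bexI[of _ "y + d"]) (auto simp: algebra_simps)
    qed
    then show ?thesis using zd assms(5) by (simp add: coset_ket_fun)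
  qed
  then show ?thesis using psi by simp
qed

lemma css_state:
  fixes D :: "('p \<Rightarrow> 'a::ab_group_add) set"
  assumes V: "code_state P (CSS_space P C D) \<rho>" and Dg: "\<forall>a\<in>D. \<forall>b\<in>D. a + b \<in> D \<and> a - b \<in> D"
  shows "\<forall>z\<in>cfgs P. \<forall>z'\<in>cfgs P. \<rho> z z' \<noteq> 0 \<longrightarrow> z \<in> {x + y |x y. x \<in> C \<and> y \<in> D} \<and> z' \<in> {x + y |x y. x \<in> C \<and> y \<in> D}"
    and "\<forall>z\<in>cfgs P. \<forall>z'\<in>cfgs P. \<forall>d\<in>D. d \<in> cfgs P \<longrightarrow> \<rho> (z + d) z' = \<rho> z z' \<and> \<rho> z (z' + d) = \<rho> z z'"
proof -
  obtain n and pr :: "nat \<Rightarrow> real" and \<psi> where psi: "\<forall>k<n. \<psi> k \<in> CSS_space P C D"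
    and rho: "\<forall>x\<in>cfgs P. \<forall>y\<in>cfgs P. \<rho> x y = (\<Sum>k<n. complex_of_real (pr k) * \<psi> k x * cnj (\<psi> k y))"
    using V unfolding code_state_def by blast
  show "\<forall>z\<in>cfgs P. \<forall>z'\<in>cfgs P. \<rho> z z' \<noteq> 0 \<longrightarrow> z \<in> {x + y |x y. x \<in> C \<and> y \<in> D} \<and> z' \<in> {x + y |x y. x \<in> C \<and> y \<in> D}"
  proof (intro ballI impI)
    fix z z' :: "'p \<Rightarrow> 'a" assume z: "z \<in> cfgs P" and z': "z' \<in> cfgs P" and nz: "\<rho> z z' \<noteq> 0"
    show "z \<in> {x + y |x y. x \<in> C \<and> y \<in> D} \<and> z' \<in> {x + y |x y. x \<in> C \<and> y \<in> D}"
    proof (rule ccontr)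
      assume "\<not> ?thesis"
      then have "\<forall>k<n. \<psi> k z = 0 \<or> \<psi> k z' = 0" using psi css_zero by blast
      then have "\<rho> z z' = 0" using rho z z' by (auto intro!: sum.neutral)
      then show False using nz by simp
    qed
  qed
  show "\<forall>z\<in>cfgs P. \<forall>z'\<in>cfgs P. \<forall>d\<in>D. d \<in> cfgs P \<longrightarrow> \<rho> (z + d) z' = \<rho> z z' \<and> \<rho> z (z' + d) = \<rho> z z'"
  proof (intro ballI impI conjI)
    fix z z' d :: "'p \<Rightarrow> 'a" assume z: "z \<in> cfgs P" and z': "z' \<in> cfgs P" and d: "d \<in> D" and dP: "d \<in> cfgs P"
    have zd: "z + d \<in> cfgs P" "z' + d \<in> cfgs P" using z z' dP by (auto intro: cfgs_add)
    have e1: "\<psi> k (z + d) = \<psi> k z" "\<psi> k (z' + d) = \<psi> k z'" if "k < n" for k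
      using css_inv[OF _ Dg d dP] psi that z z' by auto
    show "\<rho> (z + d) z' = \<rho> z z'" using rho zd z z' e1 by (auto intro!: sum.cong)
    show "\<rho> z (z' + d) = \<rho> z z'" using rho zd z z' e1 by (auto intro!: sum.cong)
  qed
qed


lemma ff_fermat:
  fixes x :: "'a::{finite,field}"
  assumes "x \<noteq> 0"
  shows "x ^ (CARD('a) - 1) = 1"
proof -
  have "(\<Prod>y\<in>UNIV-{0}. x * y) = x ^ (CARD('a) - 1) * \<Prod>(UNIV-{0::'a})"
    by (simp add: prod.distrib card_Diff_subset)
  moreover have "(\<Prod>y\<in>UNIV-{0}. x * y) = (\<Prod>y\<in>UNIV-{0::'a}. y)"
    by (rule prod.reindex_bij_witness[of _ "\<lambda>y. y / x" "\<lambda>y. x * y"]) (use assms in auto)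
  moreover have "\<Prod>(UNIV-{0::'a}) \<noteq> 0" by simp
  ultimately show ?thesis by (metis mult_cancel_right1)
qed

lemma ff_char:
  "of_nat CARD('a) = (0::'a::{finite,field})"
proof -
  have "(\<Sum>x\<in>(UNIV::'a set). x + 1) = (\<Sum>x\<in>UNIV. x)"
    by (rule sum.reindex_bij_witness[of _ "\<lambda>y. y - 1" "\<lambda>y. y + 1"]) auto
  then show ?thesis by (simp add: sum.distrib)
qed

lemma ff_card_ge2: "CARD('a::{finite,field}) \<ge> 2"
proof -
  have "card {0::'a, 1} \<le> CARD('a)" by (rule card_mono) auto
  then show ?thesis by simp
qed

lemma ff_card_nonzero: "card (- {0::'a::{finite,field}}) = CARD('a) - 1"
  by (simp add: Compl_eq_Diff_UNIV card_Diff_subset)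

definition lam :: "nat \<Rightarrow> 'a::field \<Rightarrow> 'a \<Rightarrow> 'a" where
  "lam r c x = (if x \<noteq> 0 \<and> x ^ r = c then x else 0)"

lemma int_dvd_small_eq:
  fixes a b s :: int
  assumes "0 \<le> a" "a < s" "0 \<le> b" "b < s" "s dvd a - b"
  shows "a = b"
proof (rule ccontr)
  assume "a \<noteq> b"
  then have "\<bar>s\<bar> \<le> \<bar>a - b\<bar>" using assms(5) dvd_imp_le_int by auto
  then show False using assms(1-4) by linarith
qed

lemma S_not_dvd:
  assumes "i \<in> TB_S q r l" "r \<ge> 3"
  shows "\<not> r dvd Suc i"
proof
  assume d: "r dvd Suc i"
  have "i mod r < r" using assms(2) by simp
  then have "Suc (i mod r) = r" using d assms(2) by (auto simp: dvd_eq_mod_eq_0 mod_Suc split: if_splits)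
  then show False using assms unfolding TB_S_def by auto
qed

context
  fixes \<omega> :: "'a::{finite,field}" and r s :: nat
  assumes rdvd: "r dvd CARD('a) - 1" and r3: "r \<ge> 3" and sdvd: "s dvd (CARD('a) - 1) div r"
    and gen: "\<forall>x::'a. x \<noteq> 0 \<longrightarrow> (\<exists>k::nat. x = \<omega> ^ k)"
begin


lemma Q_pos: "(CARD('a) - 1) \<ge> 3"
proof -
  have "(CARD('a) - 1) > 0" using ff_card_ge2[where 'a='a] by simp
  then show ?thesis using dvd_imp_le[OF rdvd] r3 by linarith
qed

lemma om_nz: "\<omega> \<noteq> 0"
proof
  assume z: "\<omega> = 0"
  have "-{0::'a} \<subseteq> {1}"
  proof
    fix x :: 'a assume "x \<in> -{0}"
    then obtain k where "x = \<omega> ^ k" "x \<noteq> 0" using gen by auto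
    then show "x \<in> {1}" using z by (cases k) auto
  qed
  then have "card (-{0::'a}) \<le> card {1::'a}" by (intro card_mono) auto
  then have "card (-{0::'a}) \<le> 1" by simp
  then show False using Q_pos ff_card_nonzero[where 'a='a] by simp
qed

lemma om_Q: "\<omega> ^ (CARD('a) - 1) = 1" using ff_fermat om_nz by blast

lemma om_pow_mod: "\<omega> ^ k = \<omega> ^ (k mod (CARD('a) - 1))"
proof -
  have "\<omega> ^ k = \<omega> ^ ((CARD('a) - 1) * (k div (CARD('a) - 1)) + k mod (CARD('a) - 1))" by (simp only: mult_div_mod_eq)
  also have "\<dots> = \<omega> ^ (k mod (CARD('a) - 1))" by (simp only: power_add power_mult om_Q power_one mult_1)
  finally show ?thesis .
qed

lemma om_ord: assumes "\<omega> ^ j = 1" shows "(CARD('a) - 1) dvd j"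
proof (rule ccontr)
  assume nd: "\<not> (CARD('a) - 1) dvd j"
  define j' where "j' = j mod (CARD('a) - 1)"
  have j'pos: "j' > 0" and j'lt: "j' < (CARD('a) - 1)" using nd Q_pos by (auto simp: j'_def mod_greater_zero_iff_not_dvd)
  have one: "\<omega> ^ j' = 1" using assms om_pow_mod[of j] by (simp add: j'_def)
  have "-{0::'a} \<subseteq> (\<lambda>k. \<omega> ^ k) ` {..<j'}"
  proof
    fix x :: 'a assume "x \<in> -{0}"
    then obtain k where k: "x = \<omega> ^ k" using gen by auto
    have "\<omega> ^ k = \<omega> ^ (j' * (k div j') + k mod j')" by (simp only: mult_div_mod_eq)
    also have "\<dots> = \<omega> ^ (k mod j')" by (simp only: power_add power_mult one power_one mult_1)
    finally show "x \<in> (\<lambda>k. \<omega> ^ k) ` {..<j'}" using k j'pos by auto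
  qed
  then have "card (-{0::'a}) \<le> card ((\<lambda>k. \<omega> ^ k) ` {..<j'})"
    by (intro card_mono finite_imageI finite_lessThan)
  also have "\<dots> \<le> j'" using card_image_le[of "{..<j'}" "\<lambda>k. \<omega>^k"] by simp
  finally have "card (-{0::'a}) \<le> j'" .
  then show False using j'lt ff_card_nonzero[where 'a='a] by simp
qed

lemma om_eq_iff: "\<omega> ^ a = \<omega> ^ b \<longleftrightarrow> int (CARD('a) - 1) dvd int a - int b"
proof
  assume h: "\<omega> ^ a = \<omega> ^ b"
  show "int (CARD('a) - 1) dvd int a - int b"
  proof (cases "a \<le> b")
    case True
    have "\<omega> ^ b = \<omega> ^ a * \<omega> ^ (b - a)" using True by (simp add: power_add[symmetric])
    then have "\<omega> ^ (b - a) = 1" using h om_nz by simp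
    then have "(CARD('a) - 1) dvd b - a" by (rule om_ord)
    then have "int (CARD('a) - 1) dvd int (b - a)" by (simp only: int_dvd_int_iff)
    then have "int (CARD('a) - 1) dvd int b - int a" using True by (simp add: of_nat_diff)
    then show ?thesis by (metis minus_diff_eq dvd_minus_iff)
  next
    case False
    have "\<omega> ^ a = \<omega> ^ b * \<omega> ^ (a - b)" using False by (simp add: power_add[symmetric])
    then have "\<omega> ^ (a - b) = 1" using h om_nz by simp
    then have "(CARD('a) - 1) dvd a - b" by (rule om_ord)
    then have "int (CARD('a) - 1) dvd int (a - b)" by (simp only: int_dvd_int_iff)
    then show ?thesis using False by (simp add: of_nat_diff)
  qed
next
  assume "int (CARD('a) - 1) dvd int a - int b"
  then have "int a mod int (CARD('a) - 1) = int b mod int (CARD('a) - 1)" by (simp add: mod_eq_dvd_iff)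
  then have "int (a mod (CARD('a) - 1)) = int (b mod (CARD('a) - 1))" by (simp only: zmod_int)
  then have "a mod (CARD('a) - 1) = b mod (CARD('a) - 1)" by (simp only: of_nat_eq_iff)
  then show "\<omega> ^ a = \<omega> ^ b" using om_pow_mod[of a] om_pow_mod[of b] by simp
qed

lemma mr_eq: "(CARD('a) - 1) div r * r = CARD('a) - 1" using rdvd by simp

lemma m_pos: "(CARD('a) - 1) div r > 0"
  using mr_eq Q_pos by (metis gr0I mult_is_0 not_numeral_le_zero)

lemma sum_G_zero:
  assumes "\<not> r dvd e"
  shows "(\<Sum>y\<in>{y::'a. y \<noteq> 0 \<and> y ^ r = c}. y ^ e) = 0"
proof -
  define m where "m = (CARD('a) - 1) div r"
  define g where "g = \<omega> ^ m"
  have gnz: "g \<noteq> 0" using om_nz by (simp add: g_def)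
  have gr: "g ^ r = 1" unfolding g_def power_mult[symmetric] using mr_eq om_Q by (simp add: m_def)
  have ge: "g ^ e \<noteq> 1"
  proof
    assume "g ^ e = 1"
    then have "\<omega> ^ (m * e) = 1" by (simp add: g_def power_mult)
    then have "(CARD('a) - 1) dvd m * e" by (rule om_ord)
    then have "m * r dvd m * e" using mr_eq by (simp add: m_def)
    then have "r dvd e" using m_pos by (simp add: m_def)
    then show False using assms by simp
  qed
  let ?G = "{y::'a. y \<noteq> 0 \<and> y ^ r = c}"
  have "(\<Sum>y\<in>?G. (g * y) ^ e) = (\<Sum>y\<in>?G. y ^ e)"
  proof (rule sum.reindex_bij_witness[of _ "\<lambda>b. b / g" "\<lambda>a. g * a"])
    fix a assume "a \<in> ?G"
    then show "g * a / g = a" "g * a \<in> ?G" using gnz gr by (simp_all add: power_mult_distrib)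
  next
    fix b assume "b \<in> ?G"
    then show "g * (b / g) = b" "b / g \<in> ?G" using gnz gr by (simp_all add: power_divide)
  qed simp
  then have "g ^ e * (\<Sum>y\<in>?G. y ^ e) = (\<Sum>y\<in>?G. y ^ e)"
    by (simp add: power_mult_distrib sum_distrib_left)
  then have "(g ^ e - 1) * (\<Sum>y\<in>?G. y ^ e) = 0" by (simp add: algebra_simps)
  then show ?thesis using ge by simp
qed

lemma lam_perp_C:
  assumes "w \<in> (TB_code r l :: ('a \<Rightarrow> 'a) set)"
  shows "(\<Sum>x\<in>-{0}. w x * lam r c x) = 0"
proof -
  obtain f where w: "w = ev f" and cf: "\<forall>i. i \<notin> TB_S CARD('a) r l \<longrightarrow> coeff f i = 0"
    using assms unfolding TB_code_def by auto
  let ?G = "{y::'a. y \<noteq> 0 \<and> y ^ r = c}"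
  have "(\<Sum>x\<in>-{0}. w x * lam r c x) = (\<Sum>x\<in>-{0}. if x ^ r = c then poly f x * x else 0)"
    by (intro sum.cong refl) (auto simp: w ev_def lam_def)
  also have "\<dots> = (\<Sum>x\<in>?G. poly f x * x)"
    by (subst sum.inter_filter[symmetric]) (auto intro!: sum.cong)
  also have "\<dots> = (\<Sum>x\<in>?G. \<Sum>i\<le>degree f. coeff f i * x ^ Suc i)"
    by (simp add: poly_altdef sum_distrib_left sum_distrib_right mult_ac)
  also have "\<dots> = (\<Sum>i\<le>degree f. coeff f i * (\<Sum>x\<in>?G. x ^ Suc i))"
    by (subst sum.swap) (simp add: sum_distrib_left)
  also have "\<dots> = 0"
  proof (intro sum.neutral ballI)
    fix i assume "i \<in> {..degree f}"
    show "coeff f i * (\<Sum>x\<in>?G. x ^ Suc i) = 0"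
    proof (cases "i \<in> TB_S CARD('a) r l")
      case True
      then have "\<not> r dvd Suc i" using S_not_dvd r3 by blast
      then have "(\<Sum>x\<in>?G. x ^ Suc i) = 0" by (rule sum_G_zero)
      then show ?thesis by simp
    next
      case False
      then show ?thesis using cf by simp
    qed
  qed
  finally show ?thesis .
qed

lemma of_nat_m_nz: "(of_nat ((CARD('a) - 1) div r) :: 'a) \<noteq> 0"
proof
  assume h: "(of_nat ((CARD('a) - 1) div r) :: 'a) = 0"
  have "(of_nat (CARD('a) - 1) :: 'a) = of_nat ((CARD('a) - 1) div r) * of_nat r"
    using mr_eq by (metis of_nat_mult)
  then have "(of_nat (CARD('a) - 1) :: 'a) = 0" using h by simp
  moreover have "(of_nat (CARD('a) - 1) :: 'a) = - 1"
    using ff_char[where 'a='a] ff_card_ge2[where 'a='a] by (simp add: of_nat_diff)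
  ultimately show False by simp
qed

lemma lam_perp_D:
  assumes z: "z \<in> dual_code (TB_code r l :: ('a \<Rightarrow> 'a) set)" and p: "p \<noteq> 0"
  shows "(\<Sum>x\<in>-{0}. lam r (p ^ r) x * z x) = 0"
proof -
  define m where "m = (CARD('a) - 1) div r"
  define c where "c = p ^ r"
  have cnz: "c \<noteq> 0" using p by (simp add: c_def)
  have cm: "c ^ m = 1" unfolding c_def power_mult[symmetric] using mr_eq ff_fermat[OF p]
    by (simp add: m_def mult.commute)
  define f where "f = (\<Sum>j<m. monom (inverse c ^ j) (Suc (r * j)))"
  have fC: "ev f \<in> TB_code r l"
    unfolding TB_code_def
  proof (intro CollectI exI[of _ f] conjI refl allI impI)
    fix i assume i: "i \<notin> TB_S CARD('a) r l"
    have "Suc (r * j) \<noteq> i" if j: "j < m" for j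
    proof
      assume e: "Suc (r * j) = i"
      have "r * (j + 1) \<le> r * m" using j by (intro mult_le_mono2) simp
      then have "r * j + r \<le> CARD('a) - 1" using mr_eq by (simp add: m_def algebra_simps)
      then have "Suc (r * j) < CARD('a) - 1" using r3 by linarith
      moreover have "Suc (r * j) mod r = 1" using r3 by (simp add: mod_Suc)
      ultimately have "i \<in> TB_S CARD('a) r l" using e by (auto simp: TB_S_def)
      then show False using i by simp
    qed
    then show "coeff f i = 0" by (auto simp: f_def coeff_sum coeff_monom intro!: sum.neutral)
  qed
  have pf: "poly f x = of_nat m * lam r c x" if x: "x \<noteq> 0" for x
  proof -
    have "poly f x = (\<Sum>j<m. x * (x ^ r / c) ^ j)"
    proof -
      have pc: "(x ^ j) ^ r = (x ^ r) ^ j" for j by (simp add: power_mult[symmetric] mult.commute)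
      show ?thesis by (simp add: f_def poly_sum poly_monom power_mult power_divide field_simps pc)
    qed
    also have "\<dots> = x * (\<Sum>j<m. (x ^ r / c) ^ j)" by (simp add: sum_distrib_left)
    also have "\<dots> = of_nat m * lam r c x"
    proof (cases "x ^ r = c")
      case True
      then show ?thesis using cnz x by (simp add: lam_def)
    next
      case False
      then have ne: "x ^ r / c \<noteq> 1" using cnz by simp
      have "(x ^ r / c) ^ m = 1"
        using cm ff_fermat[OF x] mr_eq by (simp add: power_divide power_mult[symmetric] m_def mult.commute)
      then have "(\<Sum>j<m. (x ^ r / c) ^ j) = 0" using geometric_sum[OF ne, of m] by simp
      then show ?thesis using False by (simp add: lam_def)
    qed
    finally show ?thesis .
  qed
  have "0 = (\<Sum>x\<in>-{0}. ev f x * z x)" using z fC unfolding dual_code_def by auto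
  also have "\<dots> = (\<Sum>x\<in>-{0}. of_nat m * (lam r c x * z x))"
    by (intro sum.cong refl) (auto simp: ev_def pf)
  also have "\<dots> = of_nat m * (\<Sum>x\<in>-{0}. lam r c x * z x)" by (simp add: sum_distrib_left)
  finally show ?thesis using of_nat_m_nz by (simp add: m_def c_def)
qed

lemma s_pos: "s > 0"
  using sdvd m_pos by (cases s) auto

lemma nums: "CARD('a) - 1 = s * ((CARD('a) - 1) div s)"
  "(CARD('a) - 1) div r = s * ((CARD('a) - 1) div r div s)"
  "(CARD('a) - 1) div s = r * ((CARD('a) - 1) div r div s)"
  "(CARD('a) - 1) = r * s * ((CARD('a) - 1) div r div s)"
proof -
  obtain M where M: "(CARD('a) - 1) div r = s * M" using sdvd by (auto elim: dvdE)
  have Q: "CARD('a) - 1 = r * s * M" using mr_eq M by (simp add: algebra_simps)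
  have Md: "(CARD('a) - 1) div r div s = M" using M s_pos by simp
  show "CARD('a) - 1 = s * ((CARD('a) - 1) div s)" using Q s_pos by simp
  show "(CARD('a) - 1) div r = s * ((CARD('a) - 1) div r div s)" using M Md by simp
  show "(CARD('a) - 1) div s = r * ((CARD('a) - 1) div r div s)" using Q Md s_pos by simp
  show "(CARD('a) - 1) = r * s * ((CARD('a) - 1) div r div s)" using Q Md by simp
qed

lemma M_pos: "(CARD('a) - 1) div r div s > 0"
  using nums(4) Q_pos by (metis gr0I mult_0_right not_numeral_le_zero)

lemma om_lt_eq: "a < CARD('a) - 1 \<Longrightarrow> b < CARD('a) - 1 \<Longrightarrow> \<omega> ^ a = \<omega> ^ b \<Longrightarrow> a = b"
  using om_eq_iff[of a b] int_dvd_small_eq[of "int a" "int (CARD('a) - 1)" "int b"] by simp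

lemma blk_nz: "fold_blk s \<omega> j \<subseteq> -{0}"
  using om_nz by (auto simp: fold_blk_def)

lemma blk_disj:
  assumes "j < (CARD('a) - 1) div s" "j' < (CARD('a) - 1) div s" "j \<noteq> j'"
  shows "fold_blk s \<omega> j \<inter> fold_blk s \<omega> j' = {}"
proof (rule ccontr)
  assume "fold_blk s \<omega> j \<inter> fold_blk s \<omega> j' \<noteq> {}"
  then obtain t t' where t: "t < s" "t' < s" and eq: "\<omega> ^ (s * j + t) = \<omega> ^ (s * j' + t')"
    by (auto simp: fold_blk_def)
  have "s * j + t < s * (j + 1)" "s * j' + t' < s * (j' + 1)" using t by auto
  moreover have "s * (j + 1) \<le> CARD('a) - 1" "s * (j' + 1) \<le> CARD('a) - 1"
    using assms nums(1) by (metis Suc_eq_plus1 Suc_leI mult_le_mono2)+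
  ultimately have "s * j + t = s * j' + t'" using om_lt_eq eq by (meson less_le_trans)
  then have "(s * j + t) div s = (s * j' + t') div s" by simp
  then show False using t assms(3) s_pos by simp
qed

lemma G3:
  assumes "t < s" "t' < s" "(\<omega> ^ (s * i + t)) ^ r = (\<omega> ^ (s * i + t')) ^ r"
  shows "t = t'"
proof -
  define M where "M = (CARD('a) - 1) div r div s"
  have "\<omega> ^ ((s * i + t) * r) = \<omega> ^ ((s * i + t') * r)" using assms(3) by (simp add: power_mult)
  then have "int (r * s * M) dvd int ((s * i + t) * r) - int ((s * i + t') * r)"
    using om_eq_iff nums(4) by (simp add: M_def)
  then have "int r * (int s * int M) dvd int r * (int t - int t')"
    by (simp add: algebra_simps)
  then have "int s * int M dvd int t - int t'" using r3 by (simp add: dvd_mult_cancel_left)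
  then have "int s dvd int t - int t'" using dvd_mult_left by blast
  then show ?thesis using int_dvd_small_eq[of "int t" "int s" "int t'"] assms(1,2) by simp
qed

lemma G2:
  assumes t: "t < s" and x: "x \<noteq> 0" and xr: "x ^ r = (\<omega> ^ (s * i + t)) ^ r"
  shows "\<exists>j. j < (CARD('a) - 1) div s \<and> j mod ((CARD('a) - 1) div r div s) = i mod ((CARD('a) - 1) div r div s)
     \<and> x \<in> fold_blk s \<omega> j"
proof -
  define M where "M = (CARD('a) - 1) div r div s"
  define N where "N = (CARD('a) - 1) div s"
  obtain k where k: "x = \<omega> ^ k" using gen x by auto
  define e where "e = k mod (CARD('a) - 1)"
  have xe: "x = \<omega> ^ e" using k om_pow_mod by (simp add: e_def)
  have "e < CARD('a) - 1" using Q_pos by (simp add: e_def)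
  then have elt: "e < s * N" using nums(1) by (simp add: N_def)
  define j where "j = e div s"
  define t' where "t' = e mod s"
  have ej: "e = s * j + t'" by (simp add: j_def t'_def)
  have jN: "j < N" using elt s_pos by (simp add: j_def less_mult_imp_div_less mult.commute)
  have t's: "t' < s" using s_pos by (simp add: t'_def)
  have "\<omega> ^ (e * r) = \<omega> ^ ((s * i + t) * r)" using xr xe by (simp add: power_mult)
  then have "int (r * s * M) dvd int (e * r) - int ((s * i + t) * r)"
    using om_eq_iff nums(4) by (simp add: M_def)
  then have "int r * (int s * int M) dvd int r * ((int s * int j + int t') - (int s * int i + int t))"
    by (simp add: algebra_simps ej)
  then have d: "int s * int M dvd (int s * int j + int t') - (int s * int i + int t)" using r3
    by (simp add: dvd_mult_cancel_left)
  then have "int s dvd (int s * int j + int t') - (int s * int i + int t)" using dvd_mult_left by blast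
  then have "int s dvd int t' - int t"
    by (metis (no_types, opaque_lifting) add_diff_add diff_add_cancel dvd_add_right_iff dvd_diff dvd_triv_left)
  then have tt: "t' = t" using int_dvd_small_eq[of "int t'" "int s" "int t"] t t's by simp
  have "int s * int M dvd int s * (int j - int i)" using d tt by (simp add: algebra_simps)
  then have "int M dvd int j - int i" using s_pos by (simp add: dvd_mult_cancel_left)
  then have "int j mod int M = int i mod int M" by (simp add: mod_eq_dvd_iff)
  then have jm: "j mod M = i mod M" by (metis of_nat_eq_iff zmod_int)
  have "x \<in> fold_blk s \<omega> j" using xe ej tt t by (auto simp: fold_blk_def)
  then show ?thesis using jN jm by (auto simp: M_def N_def)
qed

lemma I_card: "card {j. j < (CARD('a) - 1) div s \<and> j mod ((CARD('a) - 1) div r div s) = c} \<le> r"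
proof -
  define M where "M = (CARD('a) - 1) div r div s"
  have N: "(CARD('a) - 1) div s = r * M" using nums(3) by (simp add: M_def)
  have "{j. j < r * M \<and> j mod M = c} \<subseteq> (\<lambda>k. c + k * M) ` {..<r}"
  proof
    fix j assume j: "j \<in> {j. j < r * M \<and> j mod M = c}"
    then have "j = c + (j div M) * M" by auto
    moreover have "j div M < r" using j by (simp add: less_mult_imp_div_less)
    ultimately show "j \<in> (\<lambda>k. c + k * M) ` {..<r}" by blast
  qed
  then have "card {j. j < r * M \<and> j mod M = c} \<le> card ((\<lambda>k. c + k * M) ` {..<r})"
    by (intro card_mono) auto
  also have "\<dots> \<le> r" using card_image_le[of "{..<r}" "\<lambda>k. c + k * M"] by simp
  finally show ?thesis using N by (simp add: M_def)
qed

lemma dual_group: "\<forall>a\<in>dual_code C. \<forall>b\<in>dual_code C. a + b \<in> dual_code C \<and> a - b \<in> dual_code (C :: ('a \<Rightarrow> 'a) set)"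
  by (auto simp: dual_code_def cfgs_def algebra_simps sum.distrib sum_subtractf)

lemma zero_TB: "(0 :: 'a \<Rightarrow> 'a) \<in> TB_code r l"
  unfolding TB_code_def by (intro CollectI exI[of _ 0]) (auto simp: ev_def fun_eq_iff)

lemma main_qLRC:
  "qLRC (- {0::'a}) {..<(CARD('a) - 1) div s} (fold_blk s \<omega>) (qTB_space r l :: (('a \<Rightarrow> 'a) \<Rightarrow> complex) set) r"
  unfolding qLRC_def
proof (intro ballI)
  fix i assume i: "i \<in> {..<(CARD('a) - 1) div s}"
  define M where "M = (CARD('a) - 1) div r div s"
  define N where "N = (CARD('a) - 1) div s"
  define I where "I = {j. j < N \<and> j mod M = i mod M}"
  define T where "T = fold_blk s \<omega> i"
  define B where "B = \<Union> (fold_blk s \<omega> ` I)"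
  define C where "C = (TB_code r l :: ('a \<Rightarrow> 'a) set)"
  define D where "D = dual_code C"
  define W where "W = {x + y |x y. x \<in> C \<and> y \<in> D}"
  define G where "G = (\<lambda>p::'a. {y::'a. y \<noteq> 0 \<and> y ^ r = p ^ r})"
  define R where "R = (\<lambda>a::'a \<Rightarrow> 'a. \<lambda>p. if p \<in> T then - (inverse p * (\<Sum>y\<in>G p - {p}. y * a y)) else 0)"
  define L where "L = (\<lambda>u::'a \<Rightarrow> 'a. \<lambda>y. if y \<in> B - T then (\<Sum>p\<in>T. if p ^ r = y ^ r then u p * y / p else 0) else 0)"
  have iN: "i < N" using i by (simp add: N_def)
  have iI: "i \<in> I" using iN by (simp add: I_def)
  have IQ: "I \<subseteq> {..<(CARD('a) - 1) div s}" by (auto simp: I_def N_def)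
  have finI: "finite I" by (auto simp: I_def)
  have cardI: "card I \<le> r" using I_card by (simp add: I_def N_def M_def)
  have TB: "T \<subseteq> B" using iI by (auto simp: T_def B_def)
  have BP: "B \<subseteq> -{0}" using blk_nz by (auto simp: B_def)
  have TP: "\<And>p. p \<in> T \<Longrightarrow> p \<noteq> 0" using TB BP by auto
  have AB: "\<Union> (fold_blk s \<omega> ` (I - {i})) = B - T"
  proof -
    have "fold_blk s \<omega> j \<inter> T = {}" if "j \<in> I" "j \<noteq> i" for j
      using blk_disj[of j i] that iN by (auto simp: T_def I_def N_def)
    then show ?thesis using iI by (auto simp: B_def T_def)
  qed
  have G2b: "y \<in> B" if p: "p \<in> T" and y: "y \<noteq> 0" "y ^ r = p ^ r" for p y
  proof -
    obtain t where t: "t < s" "p = \<omega> ^ (s * i + t)" using p by (auto simp: T_def fold_blk_def)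
    obtain j where "j < N" "j mod M = i mod M" "y \<in> fold_blk s \<omega> j"
      using G2[OF t(1) y(1)] y(2) t(2) by (auto simp: N_def M_def)
    then show ?thesis by (auto simp: B_def I_def)
  qed
  have G3b: "p = p'" if pT: "p \<in> T" and p'T: "p' \<in> T" and pr: "p ^ r = p' ^ r" for p p'
  proof -
    obtain t where t: "t < s" "p = \<omega> ^ (s * i + t)" using pT by (auto simp: T_def fold_blk_def)
    obtain t' where t': "t' < s" "p' = \<omega> ^ (s * i + t')" using p'T by (auto simp: T_def fold_blk_def)
    have "t = t'" using G3[OF t(1) t'(1), of i] pr t t' by simp
    then show ?thesis using t t' by simp
  qed
  have finT: "finite T" by simp
  have LR: "(\<Sum>y\<in>G p. y * z y) = 0" if z: "z \<in> W" and p: "p \<noteq> 0" for z p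
  proof -
    obtain w d where wd: "z = w + d" "w \<in> C" "d \<in> D" using z by (auto simp: W_def)
    have "(\<Sum>x\<in>-{0}. lam r (p ^ r) x * z x) = (\<Sum>x\<in>-{0}. w x * lam r (p ^ r) x) + (\<Sum>x\<in>-{0}. lam r (p ^ r) x * d x)"
      by (simp add: wd sum.distrib algebra_simps)
    also have "\<dots> = 0" using lam_perp_C[of w l "p ^ r"] lam_perp_D[of d l p] wd p by (simp add: C_def D_def)
    finally have "(\<Sum>x\<in>-{0}. lam r (p ^ r) x * z x) = 0" .
    moreover have "(\<Sum>x\<in>-{0}. lam r (p ^ r) x * z x) = (\<Sum>y\<in>G p. y * z y)"
    proof -
      have "(\<Sum>x\<in>-{0}. lam r (p ^ r) x * z x) = (\<Sum>x\<in>-{0}. if x ^ r = p ^ r then x * z x else 0)"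
        by (intro sum.cong refl) (auto simp: lam_def)
      also have "\<dots> = (\<Sum>y\<in>G p. y * z y)"
        by (subst sum.inter_filter[symmetric]) (auto simp: G_def intro!: sum.cong)
      finally show ?thesis .
    qed
    ultimately show ?thesis by simp
  qed
  have Wp: "\<forall>z\<in>cfgs (-{0}). z \<in> W \<longrightarrow> restr T z = R (restr (B - T) z)"
  proof (intro ballI impI ext)
    fix z :: "'a \<Rightarrow> 'a" and p assume zP: "z \<in> cfgs (-{0})" and zW: "z \<in> W"
    show "restr T z p = R (restr (B - T) z) p"
    proof (cases "p \<in> T")
      case True
      have p0: "p \<noteq> 0" using TP True by blast
      have pG: "p \<in> G p" using p0 by (simp add: G_def)
      have sub: "(\<Sum>y\<in>G p - {p}. y * restr (B - T) z y) = (\<Sum>y\<in>G p - {p}. y * z y)"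
      proof (intro sum.cong refl)
        fix y assume y: "y \<in> G p - {p}"
        then have "y \<in> B" using G2b[OF True] by (auto simp: G_def)
        moreover have "y \<notin> T" using y G3b[OF True] by (auto simp: G_def) (metis)
        ultimately show "y * restr (B - T) z y = y * z y" by (simp add: restr_def)
      qed
      have "(\<Sum>y\<in>G p. y * z y) = p * z p + (\<Sum>y\<in>G p - {p}. y * z y)"
        using pG by (simp add: sum.remove[of "G p" p])
      then have "p * z p = - (\<Sum>y\<in>G p - {p}. y * z y)" using LR[OF zW p0] by (simp add: eq_neg_iff_add_eq_0)
      then have "z p = - (inverse p * (\<Sum>y\<in>G p - {p}. y * z y))" using p0 by (simp add: field_simps)
      then show ?thesis using True sub by (simp add: R_def restr_def)
    next
      case False
      then show ?thesis by (simp add: R_def restr_def)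
    qed
  qed
  have R_add: "\<forall>a b. R (a + b) = R a + R b"
    by (auto simp: R_def fun_eq_iff sum.distrib algebra_simps)
  have R_diff: "\<forall>a b. R (a - b) = R a - R b"
    by (auto simp: R_def fun_eq_iff sum_subtractf algebra_simps)
  have L_diff: "\<forall>u v. L (u - v) = L u - L v"
  proof (intro allI ext)
    fix u v :: "'a \<Rightarrow> 'a" and y
    show "L (u - v) y = (L u - L v) y"
    proof -
      have "(\<Sum>p\<in>T. if p ^ r = y ^ r then (u - v) p * y / p else 0)
          = (\<Sum>p\<in>T. if p ^ r = y ^ r then u p * y / p else 0) - (\<Sum>p\<in>T. if p ^ r = y ^ r then v p * y / p else 0)"
        by (simp add: sum_subtractf[symmetric] diff_divide_distrib left_diff_distrib if_distrib cong: if_cong)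
      then show ?thesis by (simp add: L_def)
    qed
  qed
  have R_cfg: "\<forall>a. R a \<in> cfgs T" by (simp add: R_def cfgs_def)
  have L_cfg: "\<forall>u. L u \<in> cfgs (B - T)" by (simp add: L_def cfgs_def)
  have Dp: "\<forall>u\<in>cfgs T. u + L u \<in> D"
  proof
    fix u :: "'a \<Rightarrow> 'a" assume u: "u \<in> cfgs T"
    have pw: "(u + L u) x = (\<Sum>p\<in>T. u p / p * lam r (p ^ r) x)" if x: "x \<noteq> 0" for x
    proof (cases "x \<in> T")
      case True
      have "(\<Sum>p\<in>T. u p / p * lam r (p ^ r) x) = (\<Sum>p\<in>T. if p = x then u p / p * x else 0)"
        using G3b[OF True] x True by (intro sum.cong refl) (auto simp: lam_def)
      also have "\<dots> = u x" using True TP[OF True] by simp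
      finally show ?thesis using True by (simp add: L_def)
    next
      case nT: False
      have ux: "u x = 0" using u nT by (simp add: cfgs_def)
      show ?thesis
      proof (cases "x \<in> B")
        case True
        then show ?thesis using ux nT x by (auto simp: L_def lam_def intro!: sum.cong)
      next
        case False
        have "(\<Sum>p\<in>T. u p / p * lam r (p ^ r) x) = 0"
          using G2b x False by (intro sum.neutral) (auto simp: lam_def)
        then show ?thesis using ux False by (simp add: L_def)
      qed
    qed
    have cf: "u + L u \<in> cfgs (-{0})"
      using u TP BP by (auto simp: cfgs_def L_def)
    have "(\<Sum>x\<in>-{0}. w x * (u + L u) x) = 0" if w: "w \<in> C" for w
    proof -
      have "(\<Sum>x\<in>-{0}. w x * (u + L u) x) = (\<Sum>x\<in>-{0}. \<Sum>p\<in>T. u p / p * (w x * lam r (p ^ r) x))"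
        using pw by (intro sum.cong refl) (auto simp: sum_distrib_left algebra_simps)
      also have "\<dots> = (\<Sum>p\<in>T. u p / p * (\<Sum>x\<in>-{0}. w x * lam r (p ^ r) x))"
        by (subst sum.swap) (simp add: sum_distrib_left)
      also have "\<dots> = 0" using lam_perp_C w by (simp add: C_def)
      finally show ?thesis .
    qed
    then show "u + L u \<in> D" using cf by (simp add: D_def dual_code_def)
  qed
  have RL: "\<forall>u\<in>cfgs T. R (L u) = u"
  proof
    fix u :: "'a \<Rightarrow> 'a" assume u: "u \<in> cfgs T"
    have zD: "u + L u \<in> D" using Dp u by blast
    have zW: "u + L u \<in> W" unfolding W_def using zD zero_TB[of l]
      by (intro CollectI exI[of _ 0] exI[of _ "u + L u"]) (simp add: C_def)
    have zP: "u + L u \<in> cfgs (-{0})" using zD by (simp add: D_def dual_code_def)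
    have TA: "T \<inter> (B - T) = {}" "(B - T) \<inter> T = {}" by auto
    have "restr T (u + L u) = u" using u L_cfg restr_zero[of "L u" "B - T" T] TA
      by (simp add: restr_add restr_id)
    moreover have "restr (B - T) (u + L u) = L u" using u L_cfg restr_zero[of u T "B - T"] TA
      by (simp add: restr_add restr_id)
    ultimately show "R (L u) = u" using Wp zP zW by metis
  qed
  have fT: "finite (cfgs T :: ('a \<Rightarrow> 'a) set)" by (rule cfgs_finite)
  obtain e :: "nat \<Rightarrow> 'a \<Rightarrow> 'a" where e: "bij_betw e {..<card (cfgs T :: ('a \<Rightarrow> 'a) set)} (cfgs T)"
    using ex_bij_betw_nat_finite[OF fT] by (auto simp: atLeast0LessThan)
  have V: "qTB_space r l = CSS_space (-{0}) C D" by (simp add: qTB_space_def C_def D_def)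
  show "\<exists>I. i \<in> I \<and> I \<subseteq> {..<(CARD('a) - 1) div s} \<and> finite I \<and> card I \<le> r \<and>
      (\<exists>n K. is_channel (\<Union> (fold_blk s \<omega> ` (I - {i}))) (\<Union> (fold_blk s \<omega> ` I)) n K \<and>
        (\<forall>\<rho>. code_state (- {0}) (qTB_space r l) \<rho> \<longrightarrow>
          (\<forall>x\<in>cfgs (- {0}). \<forall>y\<in>cfgs (- {0}).
            apply_channel (\<Union> (fold_blk s \<omega> ` (I - {i}))) (\<Union> (fold_blk s \<omega> ` I)) (- {0} - \<Union> (fold_blk s \<omega> ` I)) n K
              (ptrace (- {0}) (fold_blk s \<omega> i) \<rho>) x y = \<rho> x y)))"
  proof (intro exI[of _ I] conjI iI IQ finI cardI exI[of _ "card (cfgs T :: ('a \<Rightarrow> 'a) set)"]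
      exI[of _ "\<lambda>k. kr T B R L (e k)"] allI impI ballI)
    show "is_channel (\<Union> (fold_blk s \<omega> ` (I - {i}))) (\<Union> (fold_blk s \<omega> ` I)) (card (cfgs T :: ('a \<Rightarrow> 'a) set)) (\<lambda>k. kr T B R L (e k))"
      unfolding AB B_def[symmetric] by (rule kr_is_channel[OF TB R_cfg L_cfg e])
  next
    fix \<rho> :: "('a, 'a) qop" and x y :: "'a \<Rightarrow> 'a"
    assume cs: "code_state (- {0}) (qTB_space r l) \<rho>" and x: "x \<in> cfgs (-{0})" and y: "y \<in> cfgs (-{0})"
    have hS: "\<forall>z\<in>cfgs (-{0}). \<forall>z'\<in>cfgs (-{0}). \<rho> z z' \<noteq> 0 \<longrightarrow> z \<in> W \<and> z' \<in> W"
      using css_state(1)[OF cs[unfolded V] dual_group[of C, folded D_def]] by (simp add: W_def)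
    have hI: "\<forall>z\<in>cfgs (-{0}). \<forall>z'\<in>cfgs (-{0}). \<forall>d\<in>D. d \<in> cfgs (-{0}) \<longrightarrow> \<rho> (z + d) z' = \<rho> z z' \<and> \<rho> z (z' + d) = \<rho> z z'"
      using css_state(2)[OF cs[unfolded V] dual_group[of C, folded D_def]] by simp
    show "apply_channel (\<Union> (fold_blk s \<omega> ` (I - {i}))) (\<Union> (fold_blk s \<omega> ` I)) (- {0} - \<Union> (fold_blk s \<omega> ` I)) (card (cfgs T :: ('a \<Rightarrow> 'a) set))
        (\<lambda>k. kr T B R L (e k)) (ptrace (- {0}) (fold_blk s \<omega> i) \<rho>) x y = \<rho> x y"
      unfolding AB B_def[symmetric] T_def[symmetric]
      by (rule kr_recovers[OF TB BP R_cfg L_cfg R_add R_diff L_diff RL Wp Dp hS hI e x y])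
  qed
qed

end

theorem corollary5p10:
  fixes r l s :: nat and \<omega> :: "'a::{finite,field}"
  assumes "r dvd CARD('a) - 1"
    and "r \<ge> 3"
    and "CARD('a) \<le> 2 * l"
    and "l \<le> CARD('a) - 1"
    and "s dvd (CARD('a) - 1) div r"
    and "\<forall>x::'a. x \<noteq> 0 \<longrightarrow> (\<exists>k::nat. x = \<omega> ^ k)"
  shows "qLRC (- {0::'a}) {..<(CARD('a) - 1) div s} (fold_blk s \<omega>) (qTB_space r l :: (('a \<Rightarrow> 'a) \<Rightarrow> complex) set) r"
  using main_qLRC[OF assms(1) assms(2) assms(5) assms(6)] .

end
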